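(* Let $\mathbb{F}_d$ be a field with the discrete topology, let $G$ be an effective ample Hausdorff groupoid, and let $\sigma\colon G^{(2)} \to \mathbb{F}_d^\times$ be a continuous $2$-cocycle. Let $Q$ be a ring and $\pi\colon A_{\mathbb{F}_d}(G,\sigma) \to Q$ a ring homomorphism. Then $\pi$ is injective if and only if $\pi(1_V) \neq 0$ for every nonempty compact open subset $V$ of $G^{(0)}$.
   Context: Groupoids are locally compact Hausdorff topological groupoids; $G$ is ample if it has a basis of compact open bisections; $G$ is effective if the interior of its isotropy $\{\gamma : r(\gamma) = s(\gamma)\}$ equals $G^{(0)}$. A continuous $2$-cocycle is a continuous (locally constant) $\sigma\colon G^{(2)} \to \mathbb{F}_d^\times$ with $\sigma(\alpha,\beta)\sigma(\alpha\beta,\gamma) = \sigma(\alpha,\beta\gamma)\sigma(\beta,\gamma)$ and $\sigma(r(\gamma),\gamma)=1=\sigma(\gamma,s(\gamma))$. $A_{\mathbb{F}_d}(G,\sigma)$ is the $\mathbb{F}_d$-vector space of locally constant compactly supported functions $G\to\mathbb{F}_d$ with multiplication $(fg)(\gamma) = \sum_{\alpha\beta=\gamma}\sigma(\alpha,\beta)f(\alpha)g(\beta)$; $1_V$ is the indicator function of $V$. *)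

theory Defs
  imports "HOL-Analysis.Analysis"
begin

text \<open>A groupoid is modelled on a whole type 'g, with range map r, source map s,
  partial multiplication m (meaningful on composable pairs, s x = r y) and inverse i.
  The unit space is the range of r.\<close>

definition composable :: "('g \<Rightarrow> 'g) \<Rightarrow> ('g \<Rightarrow> 'g) \<Rightarrow> ('g \<times> 'g) set" where
  "composable r s = {(x, y). s x = r y}"

definition units :: "('g \<Rightarrow> 'g) \<Rightarrow> 'g set" where
  "units r = range r"

definition groupoid ::
  "('g \<Rightarrow> 'g) \<Rightarrow> ('g \<Rightarrow> 'g) \<Rightarrow> ('g \<Rightarrow> 'g \<Rightarrow> 'g) \<Rightarrow> ('g \<Rightarrow> 'g) \<Rightarrow> bool" where
  "groupoid r s m i \<longleftrightarrow>
     (\<forall>x. r (r x) = r x \<and> s (r x) = r x \<and> r (s x) = s x \<and> s (s x) = s x) \<and>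
     (\<forall>x y. s x = r y \<longrightarrow> r (m x y) = r x \<and> s (m x y) = s y) \<and>
     (\<forall>x y z. s x = r y \<longrightarrow> s y = r z \<longrightarrow> m (m x y) z = m x (m y z)) \<and>
     (\<forall>x. m (r x) x = x \<and> m x (s x) = x) \<and>
     (\<forall>x. r (i x) = s x \<and> s (i x) = r x \<and> m x (i x) = r x \<and> m (i x) x = s x)"

definition locally_compact_type :: "'g::topological_space itself \<Rightarrow> bool" where
  "locally_compact_type _ \<longleftrightarrow>
     (\<forall>x::'g. \<exists>U K. open U \<and> compact K \<and> x \<in> U \<and> U \<subseteq> K)"

definition topological_groupoid ::
  "('g::topological_space \<Rightarrow> 'g) \<Rightarrow> ('g \<Rightarrow> 'g) \<Rightarrow> ('g \<Rightarrow> 'g \<Rightarrow> 'g) \<Rightarrow> ('g \<Rightarrow> 'g) \<Rightarrow> bool" where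
  "topological_groupoid r s m i \<longleftrightarrow>
     groupoid r s m i \<and> locally_compact_type TYPE('g) \<and>
     continuous_on (composable r s) (\<lambda>(x, y). m x y) \<and>
     continuous_on UNIV i \<and> continuous_on UNIV r \<and> continuous_on UNIV s"

text \<open>Open bisection: r and s restricted to B are homeomorphisms onto open sets
  (injective, open maps on B; continuity of r, s is part of topological_groupoid).\<close>
definition bisection :: "('g::topological_space \<Rightarrow> 'g) \<Rightarrow> ('g \<Rightarrow> 'g) \<Rightarrow> 'g set \<Rightarrow> bool" where
  "bisection r s B \<longleftrightarrow> open B \<and> inj_on r B \<and> inj_on s B \<and>
     (\<forall>U. U \<subseteq> B \<longrightarrow> open U \<longrightarrow> open (r ` U) \<and> open (s ` U))"

definition ample :: "('g::topological_space \<Rightarrow> 'g) \<Rightarrow> ('g \<Rightarrow> 'g) \<Rightarrow> bool" where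
  "ample r s \<longleftrightarrow> (\<forall>U x. open U \<and> x \<in> U \<longrightarrow>
     (\<exists>B. compact B \<and> bisection r s B \<and> x \<in> B \<and> B \<subseteq> U))"

definition effective :: "('g::topological_space \<Rightarrow> 'g) \<Rightarrow> ('g \<Rightarrow> 'g) \<Rightarrow> bool" where
  "effective r s \<longleftrightarrow> interior {g. r g = s g} = units r"

text \<open>Continuous (locally constant, F carries the discrete topology) 2-cocycle with
  values in the nonzero elements of F.\<close>
definition cocycle ::
  "('g::topological_space \<Rightarrow> 'g) \<Rightarrow> ('g \<Rightarrow> 'g) \<Rightarrow> ('g \<Rightarrow> 'g \<Rightarrow> 'g) \<Rightarrow> ('g \<times> 'g \<Rightarrow> 'a::field) \<Rightarrow> bool" where
  "cocycle r s m \<sigma> \<longleftrightarrow>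
     (\<forall>p \<in> composable r s. \<sigma> p \<noteq> 0) \<and>
     (\<forall>a b c. s a = r b \<longrightarrow> s b = r c \<longrightarrow>
        \<sigma> (a, b) * \<sigma> (m a b, c) = \<sigma> (a, m b c) * \<sigma> (b, c)) \<and>
     (\<forall>g. \<sigma> (r g, g) = 1 \<and> \<sigma> (g, s g) = 1) \<and>
     (\<forall>p \<in> composable r s. \<exists>W. open W \<and> p \<in> W \<and>
        (\<forall>q \<in> W \<inter> composable r s. \<sigma> q = \<sigma> p))"

definition steinberg :: "('g::topological_space \<Rightarrow> 'a::zero) set" where
  "steinberg = {f. (\<forall>x. \<exists>U. open U \<and> x \<in> U \<and> (\<forall>y \<in> U. f y = f x)) \<and>
                   compact (closure {x. f x \<noteq> 0})}"

definition twisted_conv ::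
  "('g \<Rightarrow> 'g) \<Rightarrow> ('g \<Rightarrow> 'g) \<Rightarrow> ('g \<Rightarrow> 'g \<Rightarrow> 'g) \<Rightarrow> ('g \<times> 'g \<Rightarrow> 'a::field)
     \<Rightarrow> ('g \<Rightarrow> 'a) \<Rightarrow> ('g \<Rightarrow> 'a) \<Rightarrow> ('g \<Rightarrow> 'a)" where
  "twisted_conv r s m \<sigma> f g = (\<lambda>\<gamma>.
     \<Sum>(a, b) \<in> {(a, b). s a = r b \<and> m a b = \<gamma> \<and> f a \<noteq> 0 \<and> g b \<noteq> 0}.
        \<sigma> (a, b) * f a * g b)"

text \<open>Ring homomorphism (rings need not be unital) from the Steinberg algebra.\<close>
definition steinberg_ring_hom ::
  "('g::topological_space \<Rightarrow> 'g) \<Rightarrow> ('g \<Rightarrow> 'g) \<Rightarrow> ('g \<Rightarrow> 'g \<Rightarrow> 'g) \<Rightarrow> ('g \<times> 'g \<Rightarrow> 'a::field)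
     \<Rightarrow> (('g \<Rightarrow> 'a) \<Rightarrow> 'q::ring) \<Rightarrow> bool" where
  "steinberg_ring_hom r s m \<sigma> \<pi> \<longleftrightarrow>
     (\<forall>f \<in> steinberg. \<forall>g \<in> steinberg.
        \<pi> (\<lambda>x. f x + g x) = \<pi> f + \<pi> g \<and> \<pi> (twisted_conv r s m \<sigma> f g) = \<pi> f * \<pi> g)"

end

theory Submission
  imports Defs
begin

lemma gpd_basic:
  assumes "groupoid r s m i"
  shows "r (r x) = r x" "s (r x) = r x" "r (s x) = s x" "s (s x) = s x"
    "m (r x) x = x" "m x (s x) = x"
    "r (i x) = s x" "s (i x) = r x" "m x (i x) = r x" "m (i x) x = s x"
  using assms unfolding groupoid_def by auto

lemma gpd_mult:
  assumes "groupoid r s m i" "s x = r y"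
  shows "r (m x y) = r x" "s (m x y) = s y"
  using assms unfolding groupoid_def by auto

lemma gpd_assoc:
  assumes "groupoid r s m i" "s x = r y" "s y = r z"
  shows "m (m x y) z = m x (m y z)"
  using assms unfolding groupoid_def by auto

lemma gpd_inv_inv:
  assumes G: "groupoid r s m i"
  shows "i (i x) = x"
proof -
  note b = gpd_basic[OF G]
  have "x = m (r x) x" using b by simp
  also have "\<dots> = m (m (i (i x)) (i x)) x" using b by metis
  also have "\<dots> = m (i (i x)) (m (i x) x)"
    by (rule gpd_assoc[OF G]) (simp_all add: b)
  also have "\<dots> = m (i (i x)) (s (i (i x)))" using b by simp
  also have "\<dots> = i (i x)" using b by metis
  finally show ?thesis by simp
qed

lemma gpd_cancel:
  assumes G: "groupoid r s m i" and c: "s a = r b" and u: "r (m a b) = m a b"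
  shows "a = i b"
proof -
  note b = gpd_basic[OF G]
  have su: "s (m a b) = m a b" using u b by metis
  have "a = m a (s a)" using b by simp
  also have "\<dots> = m a (m b (i b))" using c b by simp
  also have "\<dots> = m (m a b) (i b)"
    by (rule gpd_assoc[OF G, symmetric]) (simp_all add: b c)
  also have "\<dots> = m (r (i b)) (i b)"
    using b gpd_mult[OF G c] su by simp
  also have "\<dots> = i b" using b by metis
  finally show ?thesis .
qed

lemma units_iff:
  assumes G: "groupoid r s m i"
  shows "u \<in> units r \<longleftrightarrow> r u = u"
  using gpd_basic[OF G] unfolding units_def by (metis rangeE rangeI)

lemma units_iff_s:
  assumes G: "groupoid r s m i"
  shows "u \<in> units r \<longleftrightarrow> s u = u"
  using gpd_basic[OF G] unfolding units_def by (metis rangeE rangeI)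

lemma open_vim: "continuous_on UNIV f \<Longrightarrow> open B \<Longrightarrow> open (f -` B)"
  using continuous_on_open_vimage[of UNIV f] by auto

lemma steinbergI:
  fixes f :: "'g::t2_space \<Rightarrow> 'a::zero"
  assumes "\<And>x. \<exists>U. open U \<and> x \<in> U \<and> (\<forall>y \<in> U. f y = f x)"
    and "compact K" and "{x. f x \<noteq> 0} \<subseteq> K"
  shows "f \<in> steinberg"
proof -
  have "closed K" using assms(2) by (rule compact_imp_closed)
  then have "closure {x. f x \<noteq> 0} \<subseteq> K" using assms(3) closure_minimal by blast
  then have "compact (closure {x. f x \<noteq> 0})"
    using compact_Int_closed[OF assms(2), of "closure {x. f x \<noteq> 0}"]
    by (simp add: Int_absorb1)
  then show ?thesis using assms(1) unfolding steinberg_def by blast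
qed

lemma steinbergD:
  assumes "f \<in> steinberg"
  shows "\<exists>U. open U \<and> x \<in> U \<and> (\<forall>y \<in> U. f y = f x)" "compact (closure {x. f x \<noteq> 0})"
  using assms unfolding steinberg_def by auto

lemma indicator_steinberg:
  assumes "compact (V::'g::t2_space set)" "open V"
  shows "(indicator V :: 'g \<Rightarrow> 'a::zero_neq_one) \<in> steinberg"
proof (rule steinbergI[OF _ assms(1)])
  have cl: "closed V" using assms(1) by (rule compact_imp_closed)
  fix x
  show "\<exists>U. open U \<and> x \<in> U \<and> (\<forall>y \<in> U. (indicator V :: 'g \<Rightarrow> 'a) y = indicator V x)"
  proof (cases "x \<in> V")
    case True then show ?thesis using assms(2) by (intro exI[of _ V]) auto
  next
    case False then show ?thesis using cl by (intro exI[of _ "-V"]) (auto simp: open_Compl)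
  qed
qed (auto simp: indicator_def)

lemma closed_vim: "continuous_on UNIV f \<Longrightarrow> closed B \<Longrightarrow> closed (f -` B)"
  unfolding closed_def by (metis open_vim vimage_Compl)

lemma shrink_one:
  fixes r s :: "'g::t2_space \<Rightarrow> 'g"
  assumes G: "groupoid r s m i" and E: "effective r s"
    and cr: "continuous_on UNIV r" and cs: "continuous_on UNIV s"
    and bis: "bisection r s B" and dis: "B \<inter> units r = {}"
    and V: "open V" "V \<noteq> {}" "V \<subseteq> units r"
  shows "\<exists>V'. open V' \<and> V' \<noteq> {} \<and> V' \<subseteq> V \<and> (\<forall>\<zeta>\<in>B. \<not> (r \<zeta> \<in> V' \<and> s \<zeta> \<in> V'))"
proof (cases "\<exists>\<eta>\<in>B. s \<eta> \<in> V \<and> r \<eta> \<noteq> s \<eta>")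
  case True
  then obtain \<eta> where \<eta>: "\<eta> \<in> B" "s \<eta> \<in> V" "r \<eta> \<noteq> s \<eta>" by blast
  have "\<exists>U W. open U \<and> open W \<and> s \<eta> \<in> U \<and> r \<eta> \<in> W \<and> U \<inter> W = {}"
    using \<eta>(3) separation_t2[of "s \<eta>" "r \<eta>"] by auto
  then obtain Ox Oy where O: "open Ox" "open Oy" "s \<eta> \<in> Ox" "r \<eta> \<in> Oy" "Ox \<inter> Oy = {}"
    by blast
  have Bo: "open B" "inj_on s B" and bo: "\<And>U. U \<subseteq> B \<Longrightarrow> open U \<Longrightarrow> open (s ` U)"
    using bis unfolding bisection_def by auto
  have "open (B \<inter> r -` Oy)" using Bo O open_vim[OF cr] by auto
  then have o1: "open (s ` (B \<inter> r -` Oy))" using bo by blast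
  define V' where "V' = V \<inter> Ox \<inter> s ` (B \<inter> r -` Oy)"
  have "open V'" unfolding V'_def using o1 V O by auto
  moreover have "s \<eta> \<in> V'" unfolding V'_def using \<eta> O by auto
  moreover have "\<forall>\<zeta>\<in>B. \<not> (r \<zeta> \<in> V' \<and> s \<zeta> \<in> V')"
  proof (intro ballI notI)
    fix \<zeta> assume z: "\<zeta> \<in> B" "r \<zeta> \<in> V' \<and> s \<zeta> \<in> V'"
    then obtain \<zeta>' where z': "\<zeta>' \<in> B" "r \<zeta>' \<in> Oy" "s \<zeta> = s \<zeta>'" unfolding V'_def by auto
    then have "\<zeta> = \<zeta>'" using Bo(2) z(1) by (meson inj_onD)
    then show False using z z' O unfolding V'_def by auto
  qed
  moreover have "V' \<subseteq> V" unfolding V'_def by blast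
  ultimately show ?thesis by blast
next
  case False
  have "open (B \<inter> s -` V)" using bis V open_vim[OF cs] unfolding bisection_def by auto
  moreover have "B \<inter> s -` V \<subseteq> {g. r g = s g}" using False by auto
  ultimately have "B \<inter> s -` V \<subseteq> interior {g. r g = s g}" by (simp add: interior_maximal)
  then have "B \<inter> s -` V \<subseteq> units r" using E unfolding effective_def by simp
  then have "\<forall>\<zeta>\<in>B. \<not> (r \<zeta> \<in> V \<and> s \<zeta> \<in> V)" using dis by auto
  then show ?thesis using V by blast
qed

lemma shrink_fin:
  fixes r s :: "'g::t2_space \<Rightarrow> 'g"
  assumes G: "groupoid r s m i" and E: "effective r s"
    and cr: "continuous_on UNIV r" and cs: "continuous_on UNIV s"
    and fin: "finite F"
  shows "(\<forall>B\<in>F. bisection r s B \<and> B \<inter> units r = {}) \<Longrightarrow> open V \<Longrightarrow> V \<noteq> {} \<Longrightarrow> V \<subseteq> units r \<Longrightarrow>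
    \<exists>V'. open V' \<and> V' \<noteq> {} \<and> V' \<subseteq> V \<and> (\<forall>B\<in>F. \<forall>\<zeta>\<in>B. \<not> (r \<zeta> \<in> V' \<and> s \<zeta> \<in> V'))"
  using fin
proof (induction F arbitrary: V rule: finite_induct)
  case empty
  then show ?case by (intro exI[of _ V]) simp
next
  case (insert B F)
  have "\<forall>B\<in>F. bisection r s B \<and> B \<inter> units r = {}" using insert.prems(1) by simp
  from insert.IH[OF this insert.prems(2-4)]
  obtain V1 where V1: "open V1" "V1 \<noteq> {}" "V1 \<subseteq> V" "\<forall>B\<in>F. \<forall>\<zeta>\<in>B. \<not> (r \<zeta> \<in> V1 \<and> s \<zeta> \<in> V1)"
    by blast
  have "bisection r s B" "B \<inter> units r = {}" using insert.prems(1) by auto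
  moreover have "V1 \<subseteq> units r" using V1 insert.prems(4) by blast
  ultimately obtain V2 where V2: "open V2" "V2 \<noteq> {}" "V2 \<subseteq> V1" "\<forall>\<zeta>\<in>B. \<not> (r \<zeta> \<in> V2 \<and> s \<zeta> \<in> V2)"
    using shrink_one[OF G E cr cs, of B V1] V1 by blast
  have "\<forall>B'\<in>insert B F. \<forall>\<zeta>\<in>B'. \<not> (r \<zeta> \<in> V2 \<and> s \<zeta> \<in> V2)"
    using V1(4) V2(3,4) by blast
  then show ?case using V1(3) V2(1-3) by (intro exI[of _ V2]) auto
qed

lemma conv_left:
  fixes \<sigma> :: "'g \<times> 'g \<Rightarrow> 'a::field"
  assumes G: "groupoid r s m i" and V: "V \<subseteq> units r" and sig: "\<forall>g. \<sigma> (r g, g) = 1"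
  shows "twisted_conv r s m \<sigma> (indicator V) q = (\<lambda>\<gamma>. if r \<gamma> \<in> V then q \<gamma> else 0)"
proof
  fix \<gamma>
  note b = gpd_basic[OF G]
  have A: "a = r bb \<and> m a bb = bb" if "a \<in> V" "s a = r bb" for a bb
  proof -
    have "s a = a" using V units_iff_s[OF G] that(1) by blast
    then have "a = r bb" using that(2) by simp
    then show ?thesis using b(5)[of bb] by simp
  qed
  have "{(a, bb). s a = r bb \<and> m a bb = \<gamma> \<and> indicator V a \<noteq> (0::'a) \<and> q bb \<noteq> 0}
      = (if r \<gamma> \<in> V \<and> q \<gamma> \<noteq> 0 then {(r \<gamma>, \<gamma>)} else {})"
  proof (intro equalityI subsetI)
    fix p assume "p \<in> {(a, bb). s a = r bb \<and> m a bb = \<gamma> \<and> indicator V a \<noteq> (0::'a) \<and> q bb \<noteq> 0}"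
    then obtain a bb where p: "p = (a, bb)" "s a = r bb" "m a bb = \<gamma>" "a \<in> V" "q bb \<noteq> 0"
      by (auto simp: indicator_def split: if_splits)
    then have "a = r bb" "bb = \<gamma>" using A by auto
    then show "p \<in> (if r \<gamma> \<in> V \<and> q \<gamma> \<noteq> 0 then {(r \<gamma>, \<gamma>)} else {})" using p by auto
  next
    fix p assume "p \<in> (if r \<gamma> \<in> V \<and> q \<gamma> \<noteq> 0 then {(r \<gamma>, \<gamma>)} else {})"
    then show "p \<in> {(a, bb). s a = r bb \<and> m a bb = \<gamma> \<and> indicator V a \<noteq> (0::'a) \<and> q bb \<noteq> 0}"
      using b by (auto simp: indicator_def split: if_splits)
  qed
  then show "twisted_conv r s m \<sigma> (indicator V) q \<gamma> = (if r \<gamma> \<in> V then q \<gamma> else 0)"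
    unfolding twisted_conv_def using sig by (auto simp: indicator_def)
qed

lemma conv_units:
  fixes \<sigma> :: "'g \<times> 'g \<Rightarrow> 'a::field"
  assumes G: "groupoid r s m i" and V: "V \<subseteq> units r" and sig: "\<forall>g. \<sigma> (r g, g) = 1"
  shows "twisted_conv r s m \<sigma> (\<lambda>x. a * indicator V x) (\<lambda>x. c * indicator V x) = (\<lambda>\<gamma>. a * c * indicator V \<gamma>)"
proof
  fix \<gamma>
  note b = gpd_basic[OF G]
  have A: "x = y \<and> m x y = y" if "x \<in> V" "y \<in> V" "s x = r y" for x y
  proof -
    have "s x = x" "r y = y" using V units_iff_s[OF G] units_iff[OF G] that(1,2) by blast+
    then show ?thesis using that(3) b(5)[of y] by simp
  qed
  have "{(x, y). s x = r y \<and> m x y = \<gamma> \<and> a * indicator V x \<noteq> (0::'a) \<and> c * indicator V y \<noteq> 0}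
      = (if \<gamma> \<in> V \<and> a \<noteq> 0 \<and> c \<noteq> 0 then {(\<gamma>, \<gamma>)} else {})"
  proof (intro equalityI subsetI)
    fix p assume "p \<in> {(x, y). s x = r y \<and> m x y = \<gamma> \<and> a * indicator V x \<noteq> (0::'a) \<and> c * indicator V y \<noteq> 0}"
    then obtain x y where p: "p = (x, y)" "s x = r y" "m x y = \<gamma>" "x \<in> V" "y \<in> V" "a \<noteq> 0" "c \<noteq> 0"
      by (auto simp: indicator_def split: if_splits)
    then have "x = y" "y = \<gamma>" using A by auto
    then show "p \<in> (if \<gamma> \<in> V \<and> a \<noteq> 0 \<and> c \<noteq> 0 then {(\<gamma>, \<gamma>)} else {})" using p by auto
  next
    fix p assume p: "p \<in> (if \<gamma> \<in> V \<and> a \<noteq> 0 \<and> c \<noteq> 0 then {(\<gamma>, \<gamma>)} else {})"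
    then have "\<gamma> \<in> V" by (auto split: if_splits)
    then have "s \<gamma> = \<gamma>" "r \<gamma> = \<gamma>" using V units_iff_s[OF G] units_iff[OF G] by auto
    then have "m \<gamma> \<gamma> = \<gamma>" using b(5)[of \<gamma>] by simp
    with p \<open>s \<gamma> = \<gamma>\<close> \<open>r \<gamma> = \<gamma>\<close>
    show "p \<in> {(x, y). s x = r y \<and> m x y = \<gamma> \<and> a * indicator V x \<noteq> (0::'a) \<and> c * indicator V y \<noteq> 0}"
      by (auto simp: indicator_def split: if_splits)
  qed
  moreover have "\<sigma> (\<gamma>, \<gamma>) = 1" if "\<gamma> \<in> V"
  proof -
    have "r \<gamma> = \<gamma>" using V units_iff[OF G] that by blast
    then show ?thesis using sig by metis
  qed
  ultimately show "twisted_conv r s m \<sigma> (\<lambda>x. a * indicator V x) (\<lambda>x. c * indicator V x) \<gamma> = a * c * indicator V \<gamma>"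
    unfolding twisted_conv_def by (auto simp: indicator_def)
qed

lemma lc_comp:
  assumes "\<forall>y\<in>U. f y = f x"
  shows "\<forall>y\<in>U. g (f y) = g (f x)"
proof (intro ballI)
  fix y assume "y \<in> U"
  with assms have "f y = f x" by blast
  then show "g (f y) = g (f x)" by (rule arg_cong)
qed

lemma scal_steinberg:
  fixes f :: "'g::t2_space \<Rightarrow> 'a::field"
  assumes "f \<in> steinberg"
  shows "(\<lambda>x. c * f x) \<in> steinberg"
proof -
  have K: "compact (closure {x. f x \<noteq> 0})" using steinbergD(2)[OF assms] .
  have sub: "{x. c * f x \<noteq> 0} \<subseteq> closure {x. f x \<noteq> 0}"
  proof
    fix x assume "x \<in> {x. c * f x \<noteq> 0}"
    then have "x \<in> {x. f x \<noteq> 0}" by simp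
    then show "x \<in> closure {x. f x \<noteq> 0}" by (rule subsetD[OF closure_subset])
  qed
  have lc: "\<exists>U. open U \<and> x \<in> U \<and> (\<forall>y\<in>U. c * f y = c * f x)" for x
  proof -
    obtain U where "open U" "x \<in> U" "\<forall>y\<in>U. f y = f x" using steinbergD(1)[OF assms] by blast
    then show ?thesis using lc_comp[of U f x "\<lambda>v. c * v"] by blast
  qed
  show ?thesis by (rule steinbergI[OF lc K sub])
qed

lemma units_open:
  fixes r s :: "'g::t2_space \<Rightarrow> 'g"
  assumes A: "ample r s"
  shows "open (units r)"
proof (subst open_subopen, intro ballI)
  fix u assume u: "u \<in> units r"
  obtain x where x: "u = r x" using u unfolding units_def by blast
  obtain B where B: "compact B" "bisection r s B" "x \<in> B" "B \<subseteq> UNIV"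
    using A unfolding ample_def by blast
  then have "open (r ` B)" unfolding bisection_def by blast
  moreover have "u \<in> r ` B" using x B(3) by blast
  ultimately show "\<exists>T. open T \<and> u \<in> T \<and> T \<subseteq> units r" unfolding units_def by blast
qed

lemma units_closed:
  fixes r :: "'g::t2_space \<Rightarrow> 'g"
  assumes G: "groupoid r s m i" and cr: "continuous_on UNIV r"
  shows "closed (units r)"
proof -
  have "units r = {x. r x = id x}" using units_iff[OF G] by auto
  then show ?thesis using closed_Collect_eq[OF cr continuous_on_id] by simp
qed

lemma composable_closed:
  fixes r s :: "'g::t2_space \<Rightarrow> 'g"
  assumes cr: "continuous_on UNIV r" and cs: "continuous_on UNIV s"
  shows "closed (composable r s)"
proof -
  have "composable r s = {p. (s \<circ> fst) p = (r \<circ> snd) p}" unfolding composable_def by auto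
  moreover have "continuous_on UNIV (s \<circ> fst)"
    by (rule continuous_on_compose[OF continuous_on_fst[OF continuous_on_id]]) (simp add: cs)
  moreover have "continuous_on UNIV (r \<circ> snd)"
    by (rule continuous_on_compose[OF continuous_on_snd[OF continuous_on_id]]) (simp add: cr)
  ultimately show ?thesis using closed_Collect_eq by metis
qed

lemma key:
  fixes r s :: "'g::t2_space \<Rightarrow> 'g" and m :: "'g \<Rightarrow> 'g \<Rightarrow> 'g" and i :: "'g \<Rightarrow> 'g"
    and \<sigma> :: "'g \<times> 'g \<Rightarrow> 'a::field"
    and \<pi> :: "('g \<Rightarrow> 'a) \<Rightarrow> 'q::ring"
  assumes TG: "topological_groupoid r s m i"
    and A: "ample r s"
    and E: "effective r s"
    and C: "cocycle r s m \<sigma>"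
    and P: "steinberg_ring_hom r s m \<sigma> \<pi>"
    and h: "h \<in> steinberg" "\<pi> h = 0" "h \<gamma>0 \<noteq> 0"
  shows "\<exists>V. V \<noteq> {} \<and> V \<subseteq> units r \<and> compact V \<and> open V \<and> \<pi> (indicator V) = 0"
proof -
  have G: "groupoid r s m i" and cm: "continuous_on (composable r s) (\<lambda>(x, y). m x y)"
    and ci: "continuous_on UNIV i" and cr: "continuous_on UNIV r" and cs: "continuous_on UNIV s"
    using TG unfolding topological_groupoid_def by auto
  note b = gpd_basic[OF G]
  have sig1: "\<forall>g. \<sigma> (r g, g) = 1" and signz: "\<forall>p\<in>composable r s. \<sigma> p \<noteq> 0"
    and sigloc: "\<forall>p\<in>composable r s. \<exists>W. open W \<and> p \<in> W \<and> (\<forall>q\<in>W \<inter> composable r s. \<sigma> q = \<sigma> p)"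
    using C unfolding cocycle_def by auto
  have Pm: "\<pi> (twisted_conv r s m \<sigma> f g) = \<pi> f * \<pi> g" if "f \<in> steinberg" "g \<in> steinberg" for f g
    using P that unfolding steinberg_ring_hom_def by blast
  have ucl: "closed (units r)" by (rule units_closed[OF G cr])
  have uop: "open (units r)" by (rule units_open[OF A])
  obtain Uh where Uh: "open Uh" "\<gamma>0 \<in> Uh" "\<forall>y\<in>Uh. h y = h \<gamma>0" using steinbergD(1)[OF h(1)] by blast
  have comp0: "(\<gamma>0, i \<gamma>0) \<in> composable r s" unfolding composable_def using b by simp
  obtain W where W: "open W" "(\<gamma>0, i \<gamma>0) \<in> W" "\<forall>q\<in>W \<inter> composable r s. \<sigma> q = \<sigma> (\<gamma>0, i \<gamma>0)"
    using sigloc comp0 by blast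
  obtain S T where ST: "open S" "open T" "(\<gamma>0, i \<gamma>0) \<in> S \<times> T" "S \<times> T \<subseteq> W"
    using open_prod_elim[OF W(1,2)] by blast
  define C0 where "C0 = T \<inter> i -` (S \<inter> Uh)"
  have "open C0" unfolding C0_def by (intro open_Int ST(2) open_vim[OF ci] ST(1) Uh(1))
  moreover have "i \<gamma>0 \<in> C0" unfolding C0_def using ST(3) Uh(2) gpd_inv_inv[OF G] by auto
  ultimately obtain Cb where Cb: "compact Cb" "bisection r s Cb" "i \<gamma>0 \<in> Cb" "Cb \<subseteq> C0"
    using A unfolding ample_def by blast
  have Cbo: "open Cb" "inj_on s Cb" "open (s ` Cb)" using Cb(2) unfolding bisection_def by auto
  define \<sigma>0 where "\<sigma>0 = \<sigma> (\<gamma>0, i \<gamma>0)"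
  define c0 where "c0 = h \<gamma>0"
  have Cbp: "\<sigma> (i bb, bb) = \<sigma>0 \<and> h (i bb) = c0" if "bb \<in> Cb" for bb
  proof -
    have "bb \<in> T" "i bb \<in> S" "i bb \<in> Uh" using Cb(4) that unfolding C0_def by auto
    moreover have "(i bb, bb) \<in> composable r s" unfolding composable_def using b by simp
    ultimately show ?thesis using ST(4) W(3) Uh(3) unfolding \<sigma>0_def c0_def by blast
  qed
  have \<sigma>0nz: "\<sigma>0 \<noteq> 0" using signz comp0 unfolding \<sigma>0_def by blast
  have c0nz: "c0 \<noteq> 0" using h(3) c0_def by simp
  define K where "K = closure {x. h x \<noteq> 0}"
  have Kc: "compact K" using steinbergD(2)[OF h(1)] K_def by simp
  define M where "M = (\<lambda>(x, y). m x y) ` ((K \<times> Cb) \<inter> composable r s)"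
  define Ob where "Ob = M - units r"
  have "compact ((K \<times> Cb) \<inter> composable r s)"
    using compact_Times[OF Kc Cb(1)] composable_closed[OF cr cs] by blast
  moreover have "continuous_on ((K \<times> Cb) \<inter> composable r s) (\<lambda>(x, y). m x y)"
    using continuous_on_subset[OF cm] by blast
  ultimately have "compact M" unfolding M_def using compact_continuous_image by blast
  then have Obc: "compact Ob" unfolding Ob_def Diff_eq using uop by (intro compact_Int_closed) auto
  have "\<forall>\<gamma>\<in>Ob. \<exists>B. compact B \<and> bisection r s B \<and> \<gamma> \<in> B \<and> B \<subseteq> - units r"
  proof
    fix \<gamma> assume "\<gamma> \<in> Ob"
    then have "\<gamma> \<in> - units r" unfolding Ob_def by blast
    moreover have "open (- units r)" using ucl by auto
    ultimately show "\<exists>B. compact B \<and> bisection r s B \<and> \<gamma> \<in> B \<and> B \<subseteq> - units r"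
      using A unfolding ample_def by blast
  qed
  then obtain Bf where Bf: "\<forall>\<gamma>\<in>Ob. compact (Bf \<gamma>) \<and> bisection r s (Bf \<gamma>) \<and> \<gamma> \<in> Bf \<gamma> \<and> Bf \<gamma> \<subseteq> - units r"
    by metis
  have "\<And>T. T \<in> Ob \<Longrightarrow> open (Bf T)" using Bf unfolding bisection_def by blast
  moreover have "Ob \<subseteq> (\<Union>c\<in>Ob. Bf c)" using Bf by blast
  ultimately obtain Ob' where Ob': "Ob' \<subseteq> Ob" "finite Ob'" "Ob \<subseteq> (\<Union>c\<in>Ob'. Bf c)"
    using compactE_image[OF Obc] by metis
  define V0 where "V0 = s ` Cb"
  have V0: "open V0" "V0 \<noteq> {}" "V0 \<subseteq> units r"
    unfolding V0_def using Cbo Cb(3) units_iff[OF G] b by auto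
  have Fp: "\<forall>B\<in>Bf ` Ob'. bisection r s B \<and> B \<inter> units r = {}" using Bf Ob'(1) by blast
  obtain V1 where V1: "open V1" "V1 \<noteq> {}" "V1 \<subseteq> V0"
      "\<forall>B\<in>Bf ` Ob'. \<forall>\<zeta>\<in>B. \<not> (r \<zeta> \<in> V1 \<and> s \<zeta> \<in> V1)"
    using shrink_fin[OF G E cr cs finite_imageI[OF Ob'(2)] Fp V0] by blast
  have V1O: "\<not> (r \<gamma> \<in> V1 \<and> s \<gamma> \<in> V1)" if "\<gamma> \<in> Ob" for \<gamma>
    using V1(4) Ob'(3) that by blast
  obtain x1 where "x1 \<in> V1" using V1(2) by blast
  then obtain V where V: "compact V" "bisection r s V" "x1 \<in> V" "V \<subseteq> V1"
    using A V1(1) unfolding ample_def by blast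
  have Vo: "open V" using V(2) unfolding bisection_def by blast
  have Vu: "V \<subseteq> units r" using V(4) V1(3) V0(3) by blast
  have Vne: "V \<noteq> {}" using V(3) by blast
  have Vcl: "closed V" using V(1) by (rule compact_imp_closed)
  define L where "L = (\<lambda>\<gamma>. if r \<gamma> \<in> V then h \<gamma> else 0)"
  have Leq: "twisted_conv r s m \<sigma> (indicator V) h = L"
    unfolding L_def by (rule conv_left[OF G Vu sig1])
  have indV: "(indicator V :: 'g \<Rightarrow> 'a) \<in> steinberg" by (rule indicator_steinberg[OF V(1) Vo])
  have Lst: "L \<in> steinberg"
  proof (rule steinbergI[OF _ Kc])
    show "{x. L x \<noteq> 0} \<subseteq> K"
    proof
      fix x assume "x \<in> {x. L x \<noteq> 0}"
      then have "x \<in> {x. h x \<noteq> 0}" unfolding L_def by (simp split: if_splits)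
      then show "x \<in> K" unfolding K_def by (rule subsetD[OF closure_subset])
    qed
  next
    fix x
    obtain Ux where Ux: "open Ux" "x \<in> Ux" "\<forall>y\<in>Ux. h y = h x" using steinbergD(1)[OF h(1)] by blast
    show "\<exists>U. open U \<and> x \<in> U \<and> (\<forall>y\<in>U. L y = L x)"
    proof (cases "r x \<in> V")
      case True
      have "\<forall>y\<in>Ux \<inter> r -` V. L y = L x"
      proof
        fix y assume y: "y \<in> Ux \<inter> r -` V"
        then have "h y = h x" using Ux(3) by blast
        then show "L y = L x" using y True unfolding L_def by simp
      qed
      moreover have "open (Ux \<inter> r -` V)" using Ux(1) Vo open_vim[OF cr] by blast
      ultimately show ?thesis using Ux(2) True by blast
    next
      case False
      have "\<forall>y\<in>Ux \<inter> r -` (- V). L y = L x"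
      proof
        fix y assume y: "y \<in> Ux \<inter> r -` (- V)"
        then show "L y = L x" using False unfolding L_def by simp
      qed
      moreover have "open (Ux \<inter> r -` (- V))" using Ux(1) Vcl open_vim[OF cr, of "- V"] by blast
      ultimately show ?thesis using Ux(2) False by blast
    qed
  qed
  define R where "R = (indicator (Cb \<inter> s -` V) :: 'g \<Rightarrow> 'a)"
  have Rst: "R \<in> steinberg" unfolding R_def
  proof (rule indicator_steinberg)
    show "compact (Cb \<inter> s -` V)" using compact_Int_closed[OF Cb(1) closed_vim[OF cs Vcl]] .
    show "open (Cb \<inter> s -` V)" using Cbo(1) open_vim[OF cs Vo] by blast
  qed
  define c where "c = \<sigma>0 * c0"
  have cnz: "c \<noteq> 0" unfolding c_def using \<sigma>0nz c0nz by simp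
  have Feq: "twisted_conv r s m \<sigma> L R = (\<lambda>\<gamma>. c * indicator V \<gamma>)"
  proof
    fix \<gamma>
    show "twisted_conv r s m \<sigma> L R \<gamma> = c * indicator V \<gamma>"
    proof (cases "\<gamma> \<in> V")
      case True
      then obtain b0 where b0: "b0 \<in> Cb" "s b0 = \<gamma>" using V(4) V1(3) unfolding V0_def by blast
      have \<gamma>u: "r \<gamma> = \<gamma>" "s \<gamma> = \<gamma>" using True Vu units_iff[OF G] units_iff_s[OF G] by auto
      have set: "{(a, bb). s a = r bb \<and> m a bb = \<gamma> \<and> L a \<noteq> 0 \<and> R bb \<noteq> 0} = {(i b0, b0)}"
      proof (intro equalityI subsetI)
        fix p assume "p \<in> {(a, bb). s a = r bb \<and> m a bb = \<gamma> \<and> L a \<noteq> 0 \<and> R bb \<noteq> 0}"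
        then obtain a bb where p: "p = (a, bb)" "s a = r bb" "m a bb = \<gamma>" "L a \<noteq> 0" "R bb \<noteq> 0" by blast
        then have bbC: "bb \<in> Cb" by (simp add: R_def indicator_def split: if_splits)
        have "s bb = \<gamma>" using gpd_mult(2)[OF G p(2)] p(3) \<gamma>u by simp
        then have "bb = b0" using Cbo(2) bbC b0 by (metis inj_onD)
        moreover have "a = i bb" using gpd_cancel[OF G p(2)] p(3) \<gamma>u by simp
        ultimately show "p \<in> {(i b0, b0)}" using p(1) by simp
      next
        fix p assume "p \<in> {(i b0, b0)}"
        then have p: "p = (i b0, b0)" by simp
        have "r (i b0) = \<gamma>" using b b0 by simp
        then have "L (i b0) = c0" using True Cbp[OF b0(1)] unfolding L_def by simp
        moreover have "R b0 = 1" unfolding R_def using b0 True by simp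
        moreover have "m (i b0) b0 = \<gamma>" using b b0 by simp
        ultimately show "p \<in> {(a, bb). s a = r bb \<and> m a bb = \<gamma> \<and> L a \<noteq> 0 \<and> R bb \<noteq> 0}"
          using p b c0nz by simp
      qed
      have "L (i b0) = c0" using True Cbp[OF b0(1)] b b0 unfolding L_def by simp
      moreover have "R b0 = 1" unfolding R_def using b0 True by simp
      ultimately show ?thesis unfolding twisted_conv_def set using Cbp[OF b0(1)] True
        by (simp add: c_def)
    next
      case False
      have emp: "{(a, bb). s a = r bb \<and> m a bb = \<gamma> \<and> L a \<noteq> 0 \<and> R bb \<noteq> 0} = {}"
      proof (rule ccontr)
        assume "{(a, bb). s a = r bb \<and> m a bb = \<gamma> \<and> L a \<noteq> 0 \<and> R bb \<noteq> 0} \<noteq> {}"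
        then obtain a bb where p: "s a = r bb" "m a bb = \<gamma>" "L a \<noteq> 0" "R bb \<noteq> 0" by blast
        then have bbC: "bb \<in> Cb" "s bb \<in> V" by (simp_all add: R_def indicator_def split: if_splits)
        from p(3) have aV: "r a \<in> V" "h a \<noteq> 0" unfolding L_def by (simp_all split: if_splits)
        show False
        proof (cases "m a bb \<in> units r")
          case True
          then have "a = i bb" using gpd_cancel[OF G p(1)] units_iff[OF G] by blast
          then have "\<gamma> = s bb" using p(2) b by simp
          then show False using False bbC by simp
        next
          case nu: False
          have "a \<in> {x. h x \<noteq> 0}" using aV(2) by simp
          then have "a \<in> K" unfolding K_def by (rule subsetD[OF closure_subset])
          moreover have "(a, bb) \<in> composable r s" unfolding composable_def using p(1) by simp
          ultimately have "(a, bb) \<in> (K \<times> Cb) \<inter> composable r s" using bbC(1) by simp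
          moreover have "\<gamma> = (\<lambda>(x, y). m x y) (a, bb)" using p(2) by simp
          ultimately have "\<gamma> \<in> M" unfolding M_def by (rule rev_image_eqI)
          then have "\<gamma> \<in> Ob" unfolding Ob_def using nu p(2) by blast
          moreover have "r \<gamma> \<in> V1" "s \<gamma> \<in> V1"
            using gpd_mult[OF G p(1)] p(2) aV(1) bbC(2) V(4) by auto
          ultimately show False using V1O by blast
        qed
      qed
      show ?thesis using False unfolding twisted_conv_def emp by simp
    qed
  qed
  have Fst: "(\<lambda>\<gamma>. c * indicator V \<gamma>) \<in> steinberg" by (rule scal_steinberg[OF indV])
  have "\<pi> (\<lambda>\<gamma>. c * indicator V \<gamma>) = \<pi> L * \<pi> R" using Pm[OF Lst Rst] Feq by simp
  also have "\<pi> L = \<pi> (indicator V) * \<pi> h" using Pm[OF indV h(1)] Leq by simp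
  finally have F0: "\<pi> (\<lambda>\<gamma>. c * indicator V \<gamma>) = 0" using h(2) by simp
  define Gi where "Gi = (\<lambda>\<gamma>. inverse c * (indicator V \<gamma> :: 'a))"
  have Gst: "Gi \<in> steinberg" unfolding Gi_def by (rule scal_steinberg[OF indV])
  have "twisted_conv r s m \<sigma> Gi (\<lambda>\<gamma>. c * indicator V \<gamma>) = (\<lambda>\<gamma>. inverse c * c * indicator V \<gamma>)"
    unfolding Gi_def by (rule conv_units[OF G Vu sig1])
  also have "\<dots> = indicator V" using cnz by simp
  finally have "\<pi> (indicator V) = \<pi> Gi * \<pi> (\<lambda>\<gamma>. c * indicator V \<gamma>)" using Pm[OF Gst Fst] by simp
  then have "\<pi> (indicator V) = 0" using F0 by simp
  then show ?thesis using Vne Vu V(1) Vo by blast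
qed

theorem theorem6p1:
  fixes r s :: "'g::t2_space \<Rightarrow> 'g" and m :: "'g \<Rightarrow> 'g \<Rightarrow> 'g" and i :: "'g \<Rightarrow> 'g"
    and \<sigma> :: "'g \<times> 'g \<Rightarrow> 'a::field"
    and \<pi> :: "('g \<Rightarrow> 'a) \<Rightarrow> 'q::ring"
  assumes "topological_groupoid r s m i"
    and "ample r s"
    and "effective r s"
    and "cocycle r s m \<sigma>"
    and "steinberg_ring_hom r s m \<sigma> \<pi>"
  shows "inj_on \<pi> steinberg \<longleftrightarrow>
    (\<forall>V. V \<noteq> {} \<and> V \<subseteq> units r \<and> compact V \<and> openin (top_of_set (units r)) V
        \<longrightarrow> \<pi> (indicator V) \<noteq> 0)"
proof -
  have Padd: "\<pi> (\<lambda>x. f x + g x) = \<pi> f + \<pi> g" if "f \<in> steinberg" "g \<in> steinberg" for f g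
    using assms(5) that unfolding steinberg_ring_hom_def by blast
  have zst: "(\<lambda>x::'g. 0 :: 'a) \<in> steinberg"
  proof (rule steinbergI[of _ "{}"])
    fix x :: 'g
    show "\<exists>U. open U \<and> x \<in> U \<and> (\<forall>y\<in>U. (0::'a) = 0)" by (intro exI[of _ UNIV]) simp
  qed auto
  have "\<pi> (\<lambda>x::'g. (0::'a) + 0) = \<pi> (\<lambda>x. 0) + \<pi> (\<lambda>x. 0)" using Padd[OF zst zst] .
  then have pi0: "\<pi> (\<lambda>x::'g. 0 :: 'a) = 0" by simp
  have uop: "open (units r)" by (rule units_open[OF assms(2)])
  show ?thesis
  proof
    assume inj: "inj_on \<pi> steinberg"
    show "\<forall>V. V \<noteq> {} \<and> V \<subseteq> units r \<and> compact V \<and> openin (top_of_set (units r)) V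
        \<longrightarrow> \<pi> (indicator V) \<noteq> 0"
    proof (intro allI impI notI)
      fix V assume V: "V \<noteq> {} \<and> V \<subseteq> units r \<and> compact V \<and> openin (top_of_set (units r)) V"
        and z: "\<pi> (indicator V) = 0"
      have "open V" using openin_open_trans[OF _ uop] V by blast
      then have ist: "(indicator V :: 'g \<Rightarrow> 'a) \<in> steinberg" using indicator_steinberg V by blast
      have "(indicator V :: 'g \<Rightarrow> 'a) = (\<lambda>x. 0)" using inj_onD[OF inj _ ist zst] z pi0 by simp
      moreover obtain x where "x \<in> V" using V by blast
      ultimately show False by (metis indicator_simps(1) zero_neq_one)
    qed
  next
    assume H: "\<forall>V. V \<noteq> {} \<and> V \<subseteq> units r \<and> compact V \<and> openin (top_of_set (units r)) V
        \<longrightarrow> \<pi> (indicator V) \<noteq> 0"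
    show "inj_on \<pi> steinberg"
    proof (rule inj_onI, rule ccontr)
      fix f g assume f: "f \<in> steinberg" and g: "g \<in> steinberg" and eq: "\<pi> f = \<pi> g" and ne: "f \<noteq> g"
      define h where "h = (\<lambda>x. f x - g x)"
      have hst: "h \<in> steinberg"
      proof (rule steinbergI[of _ "closure {x. f x \<noteq> 0} \<union> closure {x. g x \<noteq> 0}"])
        fix x
        obtain Uf where Uf: "open Uf" "x \<in> Uf" "\<forall>y\<in>Uf. f y = f x" using steinbergD(1)[OF f] by blast
        obtain Ug where Ug: "open Ug" "x \<in> Ug" "\<forall>y\<in>Ug. g y = g x" using steinbergD(1)[OF g] by blast
        have "\<forall>y\<in>Uf \<inter> Ug. h y = h x"
        proof
          fix y assume "y \<in> Uf \<inter> Ug"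
          then have "f y = f x" "g y = g x" using Uf(3) Ug(3) by blast+
          then show "h y = h x" unfolding h_def by simp
        qed
        then show "\<exists>U. open U \<and> x \<in> U \<and> (\<forall>y\<in>U. h y = h x)" using Uf(1,2) Ug(1,2)
          by (intro exI[of _ "Uf \<inter> Ug"]) blast
      next
        show "compact (closure {x. f x \<noteq> 0} \<union> closure {x. g x \<noteq> 0})"
          using steinbergD(2)[OF f] steinbergD(2)[OF g] by (rule compact_Un)
      next
        show "{x. h x \<noteq> 0} \<subseteq> closure {x. f x \<noteq> 0} \<union> closure {x. g x \<noteq> 0}"
        proof
          fix x assume "x \<in> {x. h x \<noteq> 0}"
          then have "x \<in> {x. f x \<noteq> 0} \<or> x \<in> {x. g x \<noteq> 0}" unfolding h_def by auto
          then show "x \<in> closure {x. f x \<noteq> 0} \<union> closure {x. g x \<noteq> 0}"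
            using closure_subset[of "{x. f x \<noteq> 0}"] closure_subset[of "{x. g x \<noteq> 0}"] by blast
        qed
      qed
      have "f = (\<lambda>x. h x + g x)" unfolding h_def by simp
      then have "\<pi> f = \<pi> h + \<pi> g" using Padd[OF hst g] by simp
      then have h0: "\<pi> h = 0" using eq by simp
      obtain \<gamma>0 where "f \<gamma>0 \<noteq> g \<gamma>0" using ne by (meson ext)
      then have "h \<gamma>0 \<noteq> 0" unfolding h_def by simp
      from key[OF assms hst h0 this] obtain V where
        V: "V \<noteq> {}" "V \<subseteq> units r" "compact V" "open V" "\<pi> (indicator V) = 0" by blast
      have "openin (top_of_set (units r)) V"
        unfolding openin_open using V(2,4) by (intro exI[of _ V]) blast
      then show False using H V by blast
    qed
  qed
qed

end
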